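(* Let $X$ be a pure $d$-dimensional simplicial complex, $0\le k\le d-1$, $0\le i\le d-k$, $\sigma\in X(k+i)$ and $r$ a face of $R_k(X)$ with $\bigcup r=\sigma$. Then $$w_{R_k(X)}(r)=\frac{1}{|\{r'\in R_k(X):\textstyle\bigcup r'=\sigma\}|}\,w_X(\sigma),$$ where $|\{r':\bigcup r'=\sigma\}|=\binom{k+i+1}{k}$ if $i>0$ and $=1$ if $i=0$.
   Context: $X(j)$ = faces with $j+1$ elements. For a pure $D$-dimensional complex $Y$, $w_Y(\sigma)=|\{\tau\in Y(D):\sigma\subseteq\tau\}|/(\binom{D+1}{|\sigma|}|Y(D)|)$. The representation complex $R_k(X)$ has vertex set $X(k)$ (a vertex $\tau$ is identified with $\{\tau\}$, so $\bigcup\{\tau\}=\tau$) and, for $1\le i\le d-k$, $i$-faces the sets $S$ of $i+1$ distinct elements of $X(k)$ with $\bigcup S\in X(i+k)$ and $|\bigcap S|=k$; it is pure of dimension $d-k$ and carries its own weights $w_{R_k(X)}$. *)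

theory Defs
  imports Complex_Main
begin

definition simplicial_complex :: "'a set set \<Rightarrow> bool" where
  "simplicial_complex X \<longleftrightarrow> finite X \<and> (\<forall>s\<in>X. finite s) \<and>
     (\<forall>s\<in>X. \<forall>t. t \<subseteq> s \<and> t \<noteq> {} \<longrightarrow> t \<in> X)"

definition faces :: "'a set set \<Rightarrow> nat \<Rightarrow> 'a set set" where
  "faces X j = {s \<in> X. card s = j + 1}"

definition pure_complex :: "nat \<Rightarrow> 'a set set \<Rightarrow> bool" where
  "pure_complex d X \<longleftrightarrow> simplicial_complex X \<and> (\<forall>s\<in>X. card s \<le> d + 1) \<and>
     (\<forall>s\<in>X. \<exists>t\<in>faces X d. s \<subseteq> t)"

definition weight :: "nat \<Rightarrow> 'a set set \<Rightarrow> 'a set \<Rightarrow> real" where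
  "weight D Y \<sigma> = real (card {\<tau> \<in> faces Y D. \<sigma> \<subseteq> \<tau>}) /
     (real ((D + 1) choose card \<sigma>) * real (card (faces Y D)))"

definition rep_complex :: "nat \<Rightarrow> nat \<Rightarrow> 'a set set \<Rightarrow> 'a set set set" where
  "rep_complex d k X =
     {{\<tau>} | \<tau>. \<tau> \<in> faces X k} \<union>
     {S. \<exists>i. 1 \<le> i \<and> i \<le> d - k \<and> S \<subseteq> faces X k \<and> card S = i + 1 \<and>
             \<Union>S \<in> faces X (i + k) \<and> card (\<Inter>S) = k}"

end

theory Submission
  imports Defs
begin

definition star :: "'a set \<Rightarrow> 'a set \<Rightarrow> 'a set set" where
  "star C \<tau> = (\<lambda>x. insert x C) ` (\<tau> - C)"

lemma star_Union: "C \<subseteq> \<tau> \<Longrightarrow> \<tau> - C \<noteq> {} \<Longrightarrow> \<Union>(star C \<tau>) = \<tau>"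
  unfolding star_def by auto

lemma star_Inter: "x \<in> \<tau> - C \<Longrightarrow> y \<in> \<tau> - C \<Longrightarrow> x \<noteq> y \<Longrightarrow> \<Inter>(star C \<tau>) = C"
  unfolding star_def by auto

lemma card_star: "card (star C \<tau>) = card (\<tau> - C)"
  unfolding star_def
  by (rule card_image) (auto simp: inj_on_def insert_ident)

lemma two_elems:
  assumes "finite A" "card A \<ge> 2" obtains x y where "x \<in> A" "y \<in> A" "x \<noteq> y"
  using assms card_le_Suc0_iff_eq[of A] by force

lemma struct_lemma:
  assumes "S \<subseteq> faces X k" "card S = i + 1" "1 \<le> i" "card (\<Inter>S) = k"
  shows "S = star (\<Inter>S) (\<Union>S)" "\<Inter>S \<subseteq> \<Union>S"
proof -
  define C where "C = \<Inter>S"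
  have ne: "S \<noteq> {}" using assms(2) by auto
  have fin: "finite s \<and> card s = k + 1" if "s \<in> S" for s
  proof -
    have "card s = k + 1" using assms(1) that unfolding faces_def by blast
    moreover then have "finite s" by (intro card_ge_0_finite) simp
    ultimately show ?thesis by simp
  qed
  have sub: "\<And>s. s \<in> S \<Longrightarrow> C \<subseteq> s" unfolding C_def by blast
  from ne obtain s0 where "s0 \<in> S" by blast
  have finC: "finite C" using sub[OF \<open>s0 \<in> S\<close>] fin[OF \<open>s0 \<in> S\<close>] finite_subset by blast
  have each: "\<exists>x. x \<notin> C \<and> s = insert x C" if "s \<in> S" for s
  proof -
    have "card (s - C) = 1" using card_Diff_subset[OF finC sub[OF that]] fin[OF that] assms(4) C_def by simp
    then obtain x where "s - C = {x}" by (meson card_1_singletonE)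
    then show ?thesis using sub[OF that] by blast
  qed
  show "C \<subseteq> \<Union>S" using ne unfolding C_def by blast
  show "S = star C (\<Union>S)"
  proof (rule set_eqI, rule iffI)
    fix s assume "s \<in> S"
    then obtain x where "x \<notin> C" "s = insert x C" using each by blast
    then show "s \<in> star C (\<Union>S)" unfolding star_def using \<open>s \<in> S\<close> by blast
  next
    fix t assume "t \<in> star C (\<Union>S)"
    then obtain x s where x: "x \<in> s" "s \<in> S" "x \<notin> C" "t = insert x C" unfolding star_def by blast
    then obtain y where "y \<notin> C" "s = insert y C" using each by blast
    then show "t \<in> S" using x by auto
  qed
qed

lemma star_in_R:
  assumes "simplicial_complex X" "\<tau> \<in> faces X (k + j)" "1 \<le> j" "j \<le> d - k" "C \<subseteq> \<tau>" "card C = k"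
  shows "star C \<tau> \<in> rep_complex d k X" "\<Union>(star C \<tau>) = \<tau>" "card (star C \<tau>) = j + 1"
    "\<Inter>(star C \<tau>) = C"
proof -
  have ct: "card \<tau> = k + j + 1" "\<tau> \<in> X" using assms(2) by (auto simp: faces_def)
  hence ft: "finite \<tau>" by (intro card_ge_0_finite) auto
  hence fC: "finite C" using assms(5) finite_subset by blast
  have cd: "card (\<tau> - C) = j + 1" using card_Diff_subset[OF fC assms(5)] ct assms(6) by simp
  have f2: "finite (\<tau> - C)" using ft by simp
  have g2: "card (\<tau> - C) \<ge> 2" using cd assms(3) by simp
  obtain x y where xy: "x \<in> \<tau> - C" "y \<in> \<tau> - C" "x \<noteq> y"
    by (rule two_elems[OF f2 g2])
  have ne: "\<tau> - C \<noteq> {}" using xy by blast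
  show U: "\<Union>(star C \<tau>) = \<tau>" by (rule star_Union[OF assms(5) ne])
  show I: "\<Inter>(star C \<tau>) = C" using star_Inter[OF xy] .
  show cs: "card (star C \<tau>) = j + 1" using card_star[of C \<tau>] cd by simp
  have sf: "star C \<tau> \<subseteq> faces X k"
  proof
    fix t assume "t \<in> star C \<tau>"
    then obtain z where z: "z \<in> \<tau> - C" "t = insert z C" unfolding star_def by blast
    have cl: "\<forall>s\<in>X. \<forall>t. t \<subseteq> s \<and> t \<noteq> {} \<longrightarrow> t \<in> X" using assms(1) unfolding simplicial_complex_def by simp
    have "t \<subseteq> \<tau>" "t \<noteq> {}" using z assms(5) by auto
    then have "t \<in> X" using cl ct(2) by blast
    moreover have "card t = k + 1" using z fC assms(6) by simp
    ultimately show "t \<in> faces X k" by (simp add: faces_def)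
  qed
  have "\<Union>(star C \<tau>) \<in> faces X (j + k)" using U assms(2) by (simp add: add.commute)
  then have "\<exists>i. 1 \<le> i \<and> i \<le> d - k \<and> star C \<tau> \<subseteq> faces X k \<and> card (star C \<tau>) = i + 1 \<and>
             \<Union>(star C \<tau>) \<in> faces X (i + k) \<and> card (\<Inter>(star C \<tau>)) = k"
    using sf cs I assms(3,4) assms(6) by (intro exI[of _ j]) simp
  then show "star C \<tau> \<in> rep_complex d k X"
    unfolding rep_complex_def by (intro UnI2 CollectI)
qed

lemma R_cases:
  assumes "S \<in> rep_complex d k X"
  shows "(\<exists>t. S = {t} \<and> t \<in> faces X k) \<or> (\<exists>i. 1 \<le> i \<and> i \<le> d - k \<and> S \<subseteq> faces X k \<and> card S = i + 1 \<and>
             \<Union>S \<in> faces X (i + k) \<and> card (\<Inter>S) = k)"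
  using assms unfolding rep_complex_def by blast

lemma fiber_pos:
  assumes "simplicial_complex X" "\<tau> \<in> faces X (k + j)" "1 \<le> j" "j \<le> d - k"
  shows "{S \<in> rep_complex d k X. \<Union>S = \<tau>} = (\<lambda>C. star C \<tau>) ` {C. C \<subseteq> \<tau> \<and> card C = k}"
    "inj_on (\<lambda>C. star C \<tau>) {C. C \<subseteq> \<tau> \<and> card C = k}"
proof -
  show "inj_on (\<lambda>C. star C \<tau>) {C. C \<subseteq> \<tau> \<and> card C = k}"
  proof (rule inj_onI)
    fix C C' assume a: "C \<in> {C. C \<subseteq> \<tau> \<and> card C = k}" "C' \<in> {C. C \<subseteq> \<tau> \<and> card C = k}" and e: "star C \<tau> = star C' \<tau>"
    have "\<Inter>(star C \<tau>) = C" using a(1) by (intro star_in_R(4)[OF assms]) auto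
    moreover have "\<Inter>(star C' \<tau>) = C'" using a(2) by (intro star_in_R(4)[OF assms]) auto
    ultimately
    show "C = C'" using e by metis
  qed
  show "{S \<in> rep_complex d k X. \<Union>S = \<tau>} = (\<lambda>C. star C \<tau>) ` {C. C \<subseteq> \<tau> \<and> card C = k}"
  proof (rule set_eqI, rule iffI)
    fix S assume S: "S \<in> {S \<in> rep_complex d k X. \<Union>S = \<tau>}"
    have ct: "card \<tau> = k + j + 1" using assms(2) by (auto simp: faces_def)
    have "S \<in> rep_complex d k X" using S by simp
    from R_cases[OF this] show "S \<in> (\<lambda>C. star C \<tau>) ` {C. C \<subseteq> \<tau> \<and> card C = k}"
    proof
      assume "\<exists>t. S = {t} \<and> t \<in> faces X k"
      then obtain t where "S = {t}" "t \<in> faces X k" by blast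
      moreover then have "t = \<tau>" using S by simp
      ultimately have "card \<tau> = k + 1" by (simp add: faces_def)
      then show ?thesis using ct assms(3) by simp
    next
      assume "\<exists>i. 1 \<le> i \<and> i \<le> d - k \<and> S \<subseteq> faces X k \<and> card S = i + 1 \<and>
             \<Union>S \<in> faces X (i + k) \<and> card (\<Inter>S) = k"
      then obtain i where i: "1 \<le> i" "S \<subseteq> faces X k" "card S = i + 1" "card (\<Inter>S) = k" by blast
      have U: "\<Union>S = \<tau>" using S by simp
      have "S = star (\<Inter>S) \<tau>" unfolding U[symmetric] by (rule struct_lemma(1)[OF i(2,3,1,4)])
      moreover have "\<Inter>S \<subseteq> \<tau>" unfolding U[symmetric] by (rule struct_lemma(2)[OF i(2,3,1,4)])
      ultimately show ?thesis using i(4) by (intro image_eqI[of _ _ "\<Inter>S"] CollectI conjI)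
    qed
  next
    fix S assume "S \<in> (\<lambda>C. star C \<tau>) ` {C. C \<subseteq> \<tau> \<and> card C = k}"
    then obtain C where C: "C \<subseteq> \<tau>" "card C = k" "S = star C \<tau>" by blast
    show "S \<in> {S \<in> rep_complex d k X. \<Union>S = \<tau>}" using star_in_R(1,2)[OF assms(1,2,3,4) C(1,2)] C(3) by simp
  qed
qed

lemma fiber_zero:
  assumes "\<tau> \<in> faces X k"
  shows "{S \<in> rep_complex d k X. \<Union>S = \<tau>} = {{\<tau>}}"
proof (rule set_eqI, rule iffI)
  fix S assume S: "S \<in> {S \<in> rep_complex d k X. \<Union>S = \<tau>}"
  have ct: "card \<tau> = k + 1" using assms by (auto simp: faces_def)
  have "S \<in> rep_complex d k X" using S by simp
  from R_cases[OF this] show "S \<in> {{\<tau>}}"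
  proof
    assume "\<exists>i. 1 \<le> i \<and> i \<le> d - k \<and> S \<subseteq> faces X k \<and> card S = i + 1 \<and>
             \<Union>S \<in> faces X (i + k) \<and> card (\<Inter>S) = k"
    then obtain i where "1 \<le> i" "\<Union>S \<in> faces X (i + k)" by blast
    then have "card \<tau> = i + k + 1" using S by (simp add: faces_def)
    then show ?thesis using ct \<open>1 \<le> i\<close> by simp
  next
    assume "\<exists>t. S = {t} \<and> t \<in> faces X k"
    then obtain t where "S = {t}" by blast
    moreover then have "t = \<tau>" using S by simp
    ultimately show ?thesis by simp
  qed
next
  fix S assume "S \<in> {{\<tau>}}"
  then have "S = {\<tau>}" by simp
  moreover have "{\<tau>} \<in> rep_complex d k X" using assms unfolding rep_complex_def by blast
  ultimately show "S \<in> {S \<in> rep_complex d k X. \<Union>S = \<tau>}" by simp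
qed


lemma top_faces:
  assumes "pure_complex d X" "k < d"
  defines "P \<equiv> Sigma (faces X d) (\<lambda>\<tau>. {C. C \<subseteq> \<tau> \<and> card C = k})"
  shows "faces (rep_complex d k X) (d - k) = (\<lambda>(\<tau>, C). star C \<tau>) ` P"
    "inj_on (\<lambda>(\<tau>, C). star C \<tau>) P"
proof -
  have sc: "simplicial_complex X" using assms(1) by (simp add: pure_complex_def)
  have fd: "faces X (k + (d - k)) = faces X d" using assms(2) by simp
  have j1: "1 \<le> d - k" "d - k \<le> d - k" using assms(2) by simp_all
  have SR: "star C \<tau> \<in> rep_complex d k X \<and> \<Union>(star C \<tau>) = \<tau> \<and> card (star C \<tau>) = d - k + 1
     \<and> \<Inter>(star C \<tau>) = C" if "(\<tau>, C) \<in> P" for \<tau> C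
  proof -
    have t: "\<tau> \<in> faces X (k + (d - k))" "C \<subseteq> \<tau>" "card C = k" using that fd unfolding P_def by auto
    show ?thesis using star_in_R[OF sc t(1) j1 t(2,3)] by simp
  qed
  show "inj_on (\<lambda>(\<tau>, C). star C \<tau>) P"
  proof (rule inj_onI)
    fix p q assume p: "p \<in> P" and q: "q \<in> P" and e: "(\<lambda>(\<tau>, C). star C \<tau>) p = (\<lambda>(\<tau>, C). star C \<tau>) q"
    obtain a b where ab: "p = (a, b)" by (cases p)
    obtain a' b' where ab': "q = (a', b')" by (cases q)
    have e2: "star b a = star b' a'" using e ab ab' by simp
    have "\<Union>(star b a) = a" "\<Inter>(star b a) = b" using SR[of a b] p ab by auto
    moreover have "\<Union>(star b' a') = a'" "\<Inter>(star b' a') = b'" using SR[of a' b'] q ab' by auto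
    ultimately show "p = q" using ab ab' e2 by metis
  qed
  show "faces (rep_complex d k X) (d - k) = (\<lambda>(\<tau>, C). star C \<tau>) ` P"
  proof (rule set_eqI, rule iffI)
    fix S assume S: "S \<in> faces (rep_complex d k X) (d - k)"
    then have SR': "S \<in> rep_complex d k X" and cS: "card S = d - k + 1" by (simp_all add: faces_def)
    from R_cases[OF SR'] show "S \<in> (\<lambda>(\<tau>, C). star C \<tau>) ` P"
    proof
      assume "\<exists>t. S = {t} \<and> t \<in> faces X k"
      then obtain t where "S = {t}" by blast
      then have "card S = 1" by simp
      then show ?thesis using cS j1 by simp
    next
      assume "\<exists>i. 1 \<le> i \<and> i \<le> d - k \<and> S \<subseteq> faces X k \<and> card S = i + 1 \<and>
             \<Union>S \<in> faces X (i + k) \<and> card (\<Inter>S) = k"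
      then obtain i where i: "1 \<le> i" "S \<subseteq> faces X k" "card S = i + 1" "card (\<Inter>S) = k"
        "\<Union>S \<in> faces X (i + k)" by blast
      have "i = d - k" using i(3) cS by simp
      then have U: "\<Union>S \<in> faces X d" using i(5) assms(2) by simp
      have "S = star (\<Inter>S) (\<Union>S)" by (rule struct_lemma(1)[OF i(2,3,1,4)])
      moreover have "(\<Union>S, \<Inter>S) \<in> P" unfolding P_def using U struct_lemma(2)[OF i(2,3,1,4)] i(4) by simp
      ultimately show ?thesis by (intro image_eqI[of _ _ "(\<Union>S, \<Inter>S)"]) simp_all
    qed
  next
    fix S assume "S \<in> (\<lambda>(\<tau>, C). star C \<tau>) ` P"
    then obtain a b where ab: "(a, b) \<in> P" "S = star b a" by auto
    show "S \<in> faces (rep_complex d k X) (d - k)" using SR[OF ab(1)] ab(2) by (simp add: faces_def)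
  qed
qed


theorem mainTheorem13:
  fixes X :: "'a set set" and d k i :: nat and \<sigma> :: "'a set" and r :: "'a set set"
  assumes "pure_complex d X"
    and "k < d"
    and "i \<le> d - k"
    and "\<sigma> \<in> faces X (k + i)"
    and "r \<in> rep_complex d k X" and "\<Union>r = \<sigma>"
  shows "weight (d - k) (rep_complex d k X) r =
           (1 / real (card {r' \<in> rep_complex d k X. \<Union>r' = \<sigma>})) * weight d X \<sigma>
         \<and> card {r' \<in> rep_complex d k X. \<Union>r' = \<sigma>} = (if i > 0 then (k + i + 1) choose k else 1)"
proof -
  define R where "R = rep_complex d k X"
  define P where "P = Sigma (faces X d) (\<lambda>\<tau>. {C. C \<subseteq> \<tau> \<and> card C = k})"
  define f where "f = (\<lambda>(\<tau>::'a set, C::'a set). star C \<tau>)"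
  define N where "N = card {\<tau> \<in> faces X d. \<sigma> \<subseteq> \<tau>}"
  define M where "M = card (faces X d)"
  define c where "c = (if i > 0 then (k + i + 1) choose k else 1)"
  define e where "e = (if i > 0 then 1 else (k + 1) choose k)"
  have sc: "simplicial_complex X" using assms(1) by (simp add: pure_complex_def)
  have finX: "finite X" using sc by (simp add: simplicial_complex_def)
  have cs: "card \<sigma> = k + i + 1" "\<sigma> \<in> X" using assms(4) by (auto simp: faces_def)
  have fs: "finite \<sigma>" using cs(1) by (intro card_ge_0_finite) simp
  have finF: "finite (faces X d)" using finX by (simp add: faces_def)
  have fin_faces: "finite \<tau>" if "\<tau> \<in> faces X d" for \<tau>
    using that by (intro card_ge_0_finite) (simp add: faces_def)
  have r_in: "r \<in> {r' \<in> R. \<Union>r' = \<sigma>}" using assms(5,6) R_def by simp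
  have TF: "faces R (d - k) = f ` P" "inj_on f P"
    using top_faces[OF assms(1,2)] unfolding R_def P_def f_def by simp_all
  have fib: "card {r' \<in> R. \<Union>r' = \<sigma>} = c"
   and cr: "card r = i + 1"
   and rs: "i > 0 \<Longrightarrow> \<exists>C0. C0 \<subseteq> \<sigma> \<and> card C0 = k \<and> r = star C0 \<sigma>"
   and r0: "i = 0 \<Longrightarrow> r = {\<sigma>}"
  proof -
    have "card {r' \<in> R. \<Union>r' = \<sigma>} = c \<and> card r = i + 1 \<and>
      (i > 0 \<longrightarrow> (\<exists>C0. C0 \<subseteq> \<sigma> \<and> card C0 = k \<and> r = star C0 \<sigma>)) \<and> (i = 0 \<longrightarrow> r = {\<sigma>})"
    proof (cases "i > 0")
      case True
      have j: "1 \<le> i" using True by simp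
      note FP = fiber_pos[OF sc assms(4) j assms(3)]
      have "card {r' \<in> R. \<Union>r' = \<sigma>} = card {C. C \<subseteq> \<sigma> \<and> card C = k}"
        unfolding R_def FP(1) by (rule card_image[OF FP(2)])
      also have "\<dots> = card \<sigma> choose k" by (rule n_subsets[OF fs])
      finally have c1: "card {r' \<in> R. \<Union>r' = \<sigma>} = c" using cs(1) True c_def by simp
      from r_in obtain C0 where C0: "C0 \<subseteq> \<sigma>" "card C0 = k" "r = star C0 \<sigma>"
        unfolding R_def FP(1) by blast
      have "card r = i + 1" using star_in_R(3)[OF sc assms(4) j assms(3) C0(1,2)] C0(3) by simp
      then show ?thesis using c1 C0 True by blast
    next
      case False
      then have i0: "i = 0" by simp
      have sk: "\<sigma> \<in> faces X k" using assms(4) i0 by simp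
      note FZ = fiber_zero[OF sk, of d]
      have "r = {\<sigma>}" using r_in FZ R_def by blast
      moreover have "card {r' \<in> R. \<Union>r' = \<sigma>} = c" using FZ R_def c_def i0 by simp
      ultimately show ?thesis using i0 by simp
    qed
    then show "card {r' \<in> R. \<Union>r' = \<sigma>} = c" "card r = i + 1"
      "i > 0 \<Longrightarrow> \<exists>C0. C0 \<subseteq> \<sigma> \<and> card C0 = k \<and> r = star C0 \<sigma>" "i = 0 \<Longrightarrow> r = {\<sigma>}" by blast+
  qed
  have cardP: "card P = M * ((d + 1) choose k)"
  proof -
    have "card P = (\<Sum>\<tau>\<in>faces X d. card {C. C \<subseteq> \<tau> \<and> card C = k})"
    proof -
      have "finite {C. C \<subseteq> \<tau> \<and> card C = k}" if "\<tau> \<in> faces X d" for \<tau>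
        by (rule finite_subset[of _ "Pow \<tau>"]) (auto simp: fin_faces[OF that])
      then show ?thesis unfolding P_def by (intro card_SigmaI[OF finF]) blast
    qed
    also have "\<dots> = (\<Sum>\<tau>\<in>faces X d. (d + 1) choose k)"
    proof (rule sum.cong[OF refl])
      fix \<tau> assume t: "\<tau> \<in> faces X d"
      have "card \<tau> = d + 1" using t by (simp add: faces_def)
      then show "card {C. C \<subseteq> \<tau> \<and> card C = k} = (d + 1) choose k"
        using n_subsets[OF fin_faces[OF t], of k] by simp
    qed
    also have "\<dots> = M * ((d + 1) choose k)" unfolding M_def by simp
    finally show ?thesis .
  qed
  have cardT: "card (faces R (d - k)) = M * ((d + 1) choose k)"
    using TF card_image cardP by metis
  have numset: "{T \<in> faces R (d - k). r \<subseteq> T} = f ` {p \<in> P. r \<subseteq> f p}"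
    unfolding TF(1) by blast
  have inj2: "inj_on f {p \<in> P. r \<subseteq> f p}" by (rule inj_on_subset[OF TF(2)]) blast
  have sub_eq: "{p \<in> P. r \<subseteq> f p} = {\<tau> \<in> faces X d. \<sigma> \<subseteq> \<tau>} \<times> (if i > 0 then {\<Inter>r} else {C. C \<subseteq> \<sigma> \<and> card C = k})"
  proof (cases "i > 0")
    case True
    then obtain C0 where C0: "C0 \<subseteq> \<sigma>" "card C0 = k" "r = star C0 \<sigma>" using rs by blast
    have j: "1 \<le> i" using True by simp
    have IC: "\<Inter>r = C0" using star_in_R(4)[OF sc assms(4) j assms(3) C0(1,2)] C0(3) by simp
    have fC0: "finite C0" using C0(1) fs finite_subset by blast
    have cd: "card (\<sigma> - C0) = i + 1" using card_Diff_subset[OF fC0 C0(1)] cs(1) C0(2) by simp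
    have f2: "finite (\<sigma> - C0)" using fs by simp
    have g2: "card (\<sigma> - C0) \<ge> 2" using cd j by simp
    obtain x y where xy: "x \<in> \<sigma> - C0" "y \<in> \<sigma> - C0" "x \<noteq> y" by (rule two_elems[OF f2 g2])
    show ?thesis
    proof (rule set_eqI, rule iffI)
      fix p assume p: "p \<in> {p \<in> P. r \<subseteq> f p}"
      obtain \<tau> C where pe: "p = (\<tau>, C)" by (cases p)
      have tP: "\<tau> \<in> faces X d" "C \<subseteq> \<tau>" "card C = k" using p pe P_def by auto
      have rs2: "star C0 \<sigma> \<subseteq> star C \<tau>" using p pe C0(3) f_def by simp
      have ne: "\<tau> - C \<noteq> {}"
      proof
        assume "\<tau> - C = {}"
        then have "star C \<tau> = {}" by (simp add: star_def)
        moreover have "insert x C0 \<in> star C0 \<sigma>" using xy by (auto simp: star_def)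
        ultimately show False using rs2 by blast
      qed
      have "\<sigma> \<subseteq> \<tau>"
      proof -
        have "\<Union>(star C0 \<sigma>) \<subseteq> \<Union>(star C \<tau>)" using rs2 by blast
        then show ?thesis using star_Union[OF C0(1)] star_Union[OF tP(2) ne] xy by auto
      qed
      moreover have "C = C0"
      proof -
        have "insert x C0 \<in> star C \<tau>" "insert y C0 \<in> star C \<tau>" using rs2 xy by (auto simp: star_def)
        then have "C \<subseteq> insert x C0" "C \<subseteq> insert y C0" by (auto simp: star_def)
        then have "C \<subseteq> C0" using xy by blast
        moreover have "finite C0" by (rule fC0)
        ultimately show "C = C0" using tP(3) C0(2) card_subset_eq by metis
      qed
      ultimately show "p \<in> {\<tau> \<in> faces X d. \<sigma> \<subseteq> \<tau>} \<times> (if i > 0 then {\<Inter>r} else {C. C \<subseteq> \<sigma> \<and> card C = k})"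
        using pe tP(1) True IC by simp
    next
      fix p assume p: "p \<in> {\<tau> \<in> faces X d. \<sigma> \<subseteq> \<tau>} \<times> (if i > 0 then {\<Inter>r} else {C. C \<subseteq> \<sigma> \<and> card C = k})"
      obtain \<tau> C where pe: "p = (\<tau>, C)" by (cases p)
      have t: "\<tau> \<in> faces X d" "\<sigma> \<subseteq> \<tau>" "C = C0" using p pe True IC by auto
      have "(\<tau>, C) \<in> P" using t C0 unfolding P_def by auto
      moreover have "r \<subseteq> star C \<tau>" using t C0(3) unfolding star_def by auto
      ultimately show "p \<in> {p \<in> P. r \<subseteq> f p}" using pe f_def by simp
    qed
  next
    case False
    then have r0': "r = {\<sigma>}" and i0: "i = 0" using r0 by auto
    show ?thesis
    proof (rule set_eqI, rule iffI)
      fix p assume p: "p \<in> {p \<in> P. r \<subseteq> f p}"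
      obtain \<tau> C where pe: "p = (\<tau>, C)" by (cases p)
      have tP: "\<tau> \<in> faces X d" "C \<subseteq> \<tau>" "card C = k" using p pe P_def by auto
      have "\<sigma> \<in> star C \<tau>" using p pe r0' f_def by simp
      then obtain z where z: "z \<in> \<tau> - C" "\<sigma> = insert z C" unfolding star_def by blast
      have "\<sigma> \<subseteq> \<tau>" "C \<subseteq> \<sigma>" using z tP(2) by auto
      then show "p \<in> {\<tau> \<in> faces X d. \<sigma> \<subseteq> \<tau>} \<times> (if i > 0 then {\<Inter>r} else {C. C \<subseteq> \<sigma> \<and> card C = k})"
        using pe tP i0 by simp
    next
      fix p assume p: "p \<in> {\<tau> \<in> faces X d. \<sigma> \<subseteq> \<tau>} \<times> (if i > 0 then {\<Inter>r} else {C. C \<subseteq> \<sigma> \<and> card C = k})"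
      obtain \<tau> C where pe: "p = (\<tau>, C)" by (cases p)
      have t: "\<tau> \<in> faces X d" "\<sigma> \<subseteq> \<tau>" "C \<subseteq> \<sigma>" "card C = k" using p pe i0 by auto
      have fC: "finite C" using t(3) fs finite_subset by blast
      have "card (\<sigma> - C) = 1" using card_Diff_subset[OF fC t(3)] cs(1) t(4) i0 by simp
      then obtain z where z: "\<sigma> - C = {z}" by (meson card_1_singletonE)
      have "\<sigma> = insert z C" "z \<in> \<tau> - C" using z t(2,3) by auto
      then have "\<sigma> \<in> star C \<tau>" unfolding star_def by blast
      moreover have "(\<tau>, C) \<in> P" using t unfolding P_def by auto
      ultimately show "p \<in> {p \<in> P. r \<subseteq> f p}" using pe f_def r0' by simp
    qed
  qed
  have cardNum: "card {T \<in> faces R (d - k). r \<subseteq> T} = N * e"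
  proof -
    have "card {T \<in> faces R (d - k). r \<subseteq> T} = card {p \<in> P. r \<subseteq> f p}"
      unfolding numset by (rule card_image[OF inj2])
    also have "\<dots> = N * (if i > 0 then 1 else card {C. C \<subseteq> \<sigma> \<and> card C = k})"
      unfolding sub_eq N_def by (simp add: card_cartesian_product)
    also have "\<dots> = N * e"
      using n_subsets[OF fs, of k] cs(1) e_def by simp
    finally show ?thesis .
  qed
  define A where "A = (d + 1) choose (k + i + 1)"
  define B where "B = (k + i + 1) choose k"
  define Cc where "Cc = (d + 1) choose k"
  define D where "D = (d - k + 1) choose (i + 1)"
  have key: "A * B = Cc * D"
    using choose_mult[of k "k + i + 1" "d + 1"] assms(2,3) unfolding A_def B_def Cc_def D_def
    by (simp add: Suc_diff_le)
  have keyr: "real A * real B = real Cc * real D" using key by (metis of_nat_mult)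
  have Bpos: "real B > 0" unfolding B_def by simp
  have wR: "weight (d - k) R r = real (N * e) / (real D * real (M * Cc))"
    unfolding weight_def cardNum cardT cr D_def Cc_def by (simp add: add.commute)
  have wX: "weight d X \<sigma> = real N / (real A * real M)"
    unfolding weight_def N_def M_def A_def cs(1) by simp
  have eq: "weight (d - k) R r = (1 / real c) * weight d X \<sigma>"
  proof (cases "i > 0")
    case True
    then have "e = 1" "c = B" using e_def c_def B_def by simp_all
    then show ?thesis unfolding wR wX using keyr Bpos
      by (simp add: field_simps)
  next
    case False
    then have ee: "e = B" "c = 1" using e_def c_def B_def by simp_all
    have den: "real D * real (M * Cc) = real B * (real A * real M)" using keyr
      by (simp add: algebra_simps)
    have "real (N * e) / (real D * real (M * Cc)) = (real B * real N) / (real B * (real A * real M))"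
      unfolding den ee by simp
    also have "\<dots> = real N / (real A * real M)" using Bpos by simp
    finally show ?thesis unfolding wR wX ee by simp
  qed
  show ?thesis using eq fib c_def R_def by simp
qed

end
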